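(* Let $(A,B)$ be in canonical form with index set $\mathcal I=\{k_1,\dots,k_m\}$ and controllability index $p$, and let the costs $f_t,g_t$ satisfy the standing assumptions. Define $C:\mathbb R^{mN}\to\mathbb R$ as in the context. Then: (i) $C$ is $\mu_f$-strongly convex and $l_c$-smooth with $l_c=p\,l_f+(p+1)\,l_g\,\|[I_m,\,-A(\mathcal I,:)]\|^2$. (ii) For every $(\mathbf x,\mathbf u)$ with $x_0=0$ and $x_{t+1}=Ax_t+Bu_t$ for $0\le t\le N-1$, setting $z_t=x_t^{\mathcal I}$ ($1\le t\le N$) gives $x_t(\mathbf z)=x_t$, $u_t(\mathbf z)=u_t$ and $C(\mathbf z)=J(\mathbf x,\mathbf u)$. Conversely, for every $\mathbf z\in\mathbb R^{mN}$, the pair $(\mathbf x(\mathbf z),\mathbf u(\mathbf z))$ satisfies $x_{t+1}(\mathbf z)=Ax_t(\mathbf z)+Bu_t(\mathbf z)$, $x_0(\mathbf z)=0$, and $J(\mathbf x(\mathbf z),\mathbf u(\mathbf z))=C(\mathbf z)$. (iii) For each $t$, the stage term $f_t(x_t(\mathbf z))+g_t(u_t(\mathbf z))$ depends only on $z_{t-p+1},\dots,z_{t+1}$.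
   Context: Canonical form: $A\in\mathbb R^{n\times n}$, $B\in\mathbb R^{n\times m}$ are in canonical form if there are indices $0=k_0<k_1<\dots<k_m=n$ such that, with $\mathcal I=\{k_1,\dots,k_m\}$ and $e_i$ the standard basis of $\mathbb R^n$: for every $i\notin\mathcal I$ the $i$-th row of $A$ equals $e_{i+1}^\top$; the rows of $A$ indexed by $\mathcal I$ are arbitrary; the $j$-th column of $B$ is $e_{k_j}$. Put $p_i=k_i-k_{i-1}$ and $p=\max_i p_i$ (the controllability index). $A(\mathcal I,:)\in\mathbb R^{m\times n}$ is the matrix formed by rows $k_1,\dots,k_m$ of $A$; for $x\in\mathbb R^n$, $x^{\mathcal I}=(x^{k_1},\dots,x^{k_m})^\top$; $x^i$ is the $i$-th entry. Problem: dynamics $x_{t+1}=Ax_t+Bu_t$ ($0\le t\le N-1$), $x_0=0$; cost $J(\mathbf x,\mathbf u)=\sum_{t=0}^{N-1}[f_t(x_t)+g_t(u_t)]+f_N(x_N)$, $\mathbf x=(x_1,\dots,x_N)$, $\mathbf u=(u_0,\dots,u_{N-1})$. Standing assumptions: each $f_t:\mathbb R^n\to\mathbb R$ ($0\le t\le N$) is $\mu_f$-strongly convex and $l_f$-smooth (gradient $l_f$-Lipschitz); each $g_t:\mathbb R^m\to\mathbb R$ ($0\le t\le N-1$) is convex and $l_g$-smooth; $\mu_f,l_f,l_g>0$; the minimizers $\theta_t=\arg\min f_t$, $\xi_t=\arg\min g_t$ satisfy $\|\theta_t\|\le\bar\theta$, $\|\xi_t\|\le\bar\xi$. Reparametrization: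 for $\mathbf z=(z_1,\dots,z_N)\in\mathbb R^{mN}$ ($z_t\in\mathbb R^m$, with convention $z_t=0$ for $t\le 0$), set $x_t(\mathbf z)=(z^1_{t-p_1+1},\dots,z^1_t,\ z^2_{t-p_2+1},\dots,z^2_t,\ \dots,\ z^m_{t-p_m+1},\dots,z^m_t)^\top$ for $0\le t\le N$, $u_t(\mathbf z)=z_{t+1}-A(\mathcal I,:)x_t(\mathbf z)$ for $0\le t\le N-1$, and $C(\mathbf z)=\sum_{t=0}^{N}f_t(x_t(\mathbf z))+\sum_{t=0}^{N-1}g_t(u_t(\mathbf z))$. *)

theory Defs
  imports "HOL-Analysis.Analysis"
begin

text \<open>Coordinates of R^d are indexed by a finite type 'd with a fixed enumeration;
  position i (1-based, 1 <= i <= CARD('d)) corresponds to the element ix i.\<close>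

definition ix :: "nat \<Rightarrow> 'a::enum" where
  "ix i = enum_class.enum ! (i - 1)"

definition pos :: "'a::enum \<Rightarrow> nat" where
  "pos a = (THE i. i \<in> {1..CARD('a)} \<and> ix i = a)"

definition strongly_convex :: "real \<Rightarrow> ('v::real_normed_vector \<Rightarrow> real) \<Rightarrow> bool" where
  "strongly_convex \<mu> f \<longleftrightarrow>
     (\<forall>x y. \<forall>\<theta>::real. 0 \<le> \<theta> \<and> \<theta> \<le> 1 \<longrightarrow>
        f (\<theta> *\<^sub>R x + (1 - \<theta>) *\<^sub>R y)
          \<le> \<theta> * f x + (1 - \<theta>) * f y - \<mu> / 2 * \<theta> * (1 - \<theta>) * (norm (x - y))\<^sup>2)"

definition smooth :: "real \<Rightarrow> ('v::real_inner \<Rightarrow> real) \<Rightarrow> bool" where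
  "smooth l f \<longleftrightarrow>
     (\<exists>G. (\<forall>x. (f has_derivative (\<lambda>h. G x \<bullet> h)) (at x))
        \<and> (\<forall>x y. norm (G x - G y) \<le> l * norm (x - y)))"

definition canonical_form :: "real^('n::enum)^('n::enum) \<Rightarrow> real^('m::enum)^('n::enum) \<Rightarrow> (nat \<Rightarrow> nat) \<Rightarrow> bool" where
  "canonical_form A B k \<longleftrightarrow>
     k 0 = 0 \<and> (\<forall>i<CARD(('m::enum)). k i < k (Suc i)) \<and> k CARD(('m::enum)) = CARD(('n::enum)) \<and>
     (\<forall>i\<in>{1..CARD(('n::enum))}. i \<notin> k ` {1..CARD(('m::enum))} \<longrightarrow>
        (\<forall>j\<in>{1..CARD(('n::enum))}. A $ ix i $ ix j = (if j = i + 1 then 1 else 0))) \<and>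
     (\<forall>i\<in>{1..CARD(('n::enum))}. \<forall>j\<in>{1..CARD(('m::enum))}. B $ ix i $ ix j = (if i = k j then 1 else 0))"

definition ctrl_index :: "(nat \<Rightarrow> nat) \<Rightarrow> nat \<Rightarrow> nat" where
  "ctrl_index k m = Max ((\<lambda>i. k i - k (i - 1)) ` {1..m})"

definition rowsI :: "real^('n::enum)^('n::enum) \<Rightarrow> (nat \<Rightarrow> nat) \<Rightarrow> real^('n::enum)^('m::enum)" where
  "rowsI A k = (\<chi> j. A $ ix (k (pos j)))"

definition entriesI :: "real^('n::enum) \<Rightarrow> (nat \<Rightarrow> nat) \<Rightarrow> real^('m::enum)" where
  "entriesI x k = (\<chi> j. x $ ix (k (pos j)))"

definition blk :: "(nat \<Rightarrow> nat) \<Rightarrow> nat \<Rightarrow> nat \<Rightarrow> nat" where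
  "blk k m i = (THE j. j \<in> {1..m} \<and> k (j - 1) < i \<and> i \<le> k j)"

definition zt :: "real^('m::enum)^('T::enum) \<Rightarrow> int \<Rightarrow> real^('m::enum)" where
  "zt z s = (if 1 \<le> s \<and> s \<le> int CARD(('T::enum)) then z $ ix (nat s) else 0)"

definition xz :: "(nat \<Rightarrow> nat) \<Rightarrow> real^('m::enum)^('T::enum) \<Rightarrow> nat \<Rightarrow> real^('n::enum)" where
  "xz k z t = (\<chi> a. let i = pos a; j = blk k CARD(('m::enum)) i
                   in zt z (int t - int (k j - i)) $ ix j)"

definition uz :: "real^('n::enum)^('n::enum) \<Rightarrow> (nat \<Rightarrow> nat) \<Rightarrow> real^('m::enum)^('T::enum) \<Rightarrow> nat \<Rightarrow> real^('m::enum)" where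
  "uz A k z t = zt z (int t + 1) - rowsI A k *v xz k z t"

definition Cz :: "(nat \<Rightarrow> real^('n::enum) \<Rightarrow> real) \<Rightarrow> (nat \<Rightarrow> real^('m::enum) \<Rightarrow> real)
      \<Rightarrow> real^('n::enum)^('n::enum) \<Rightarrow> (nat \<Rightarrow> nat) \<Rightarrow> real^('m::enum)^('T::enum) \<Rightarrow> real" where
  "Cz f g A k z = (\<Sum>t=0..CARD(('T::enum)). f t (xz k z t)) + (\<Sum>t<CARD(('T::enum)). g t (uz A k z t))"

definition Jcost :: "nat \<Rightarrow> (nat \<Rightarrow> real^('n::enum) \<Rightarrow> real) \<Rightarrow> (nat \<Rightarrow> real^('m::enum) \<Rightarrow> real)
      \<Rightarrow> (nat \<Rightarrow> real^('n::enum)) \<Rightarrow> (nat \<Rightarrow> real^('m::enum)) \<Rightarrow> real" where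
  "Jcost N f g x u = (\<Sum>t<N. f t (x t) + g t (u t)) + f N (x N)"

end

theory Submission
  imports Defs
begin


lemma ix_bij: "bij_betw (ix :: nat \<Rightarrow> 'a::enum) {1..CARD('a)} UNIV"
proof -
  have L: "CARD('a) = length (enum_class.enum :: 'a list)" by (rule card_UNIV_length_enum)
  have "bij_betw (\<lambda>i. (enum_class.enum :: 'a list) ! i) {..<length (enum_class.enum :: 'a list)} (set (enum_class.enum :: 'a list))"
    by (rule bij_betw_nth) (simp_all add: enum_distinct)
  moreover have "bij_betw (\<lambda>i. i - 1) {1..CARD('a)} {..<CARD('a)}"
    by (rule bij_betw_byWitness[where f'="\<lambda>i. i+1"]) auto
  ultimately have "bij_betw ((\<lambda>i. (enum_class.enum :: 'a list) ! i) \<circ> (\<lambda>i. i - 1)) {1..CARD('a)} (set enum_class.enum)"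
    using L bij_betw_trans by metis
  then show ?thesis by (simp add: ix_def[abs_def] o_def UNIV_enum)
qed

lemma ix_inj: assumes "i \<in> {1..CARD('a::enum)}" "j \<in> {1..CARD('a)}" shows "(ix i :: 'a) = ix j \<longleftrightarrow> i = j"
  using inj_onD[OF bij_betw_imp_inj_on[OF ix_bij[where 'a='a]] _ assms] by blast

lemma pos_ix: assumes "i \<in> {1..CARD('a::enum)}" shows "pos (ix i :: 'a) = i"
  unfolding pos_def
proof (rule the_equality)
  show "i \<in> {1..CARD('a)} \<and> (ix i :: 'a) = ix i" using assms by simp
  fix j assume "j \<in> {1..CARD('a)} \<and> (ix j::'a) = ix i"
  then show "j = i" using ix_inj[of j i] assms by blast
qed

lemma pos_range: "pos (a::'a::enum) \<in> {1..CARD('a)} \<and> ix (pos a) = a"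
proof -
  obtain i where i: "i \<in> {1..CARD('a)}" "ix i = a" using ix_bij[where 'a='a]
    by (metis bij_betw_iff_bijections UNIV_I)
  then show ?thesis using pos_ix[OF i(1)] by simp
qed

lemma ix_pos[simp]: "ix (pos a) = a" using pos_range by blast

lemma sum_UNIV_ix: "(\<Sum>a\<in>(UNIV::'a::enum set). h a) = (\<Sum>i=1..CARD('a). h (ix i))"
  using sum.reindex_bij_betw[OF ix_bij, of h] by simp

lemma vec_eq_ix: "(x::'b^'a::enum) = y \<longleftrightarrow> (\<forall>i\<in>{1..CARD('a)}. x $ ix i = y $ ix i)"
  by (metis vec_eq_iff pos_range)

lemma card_ge1: "CARD('a::enum) \<ge> 1"
  by (simp add: Suc_leI finite_UNIV_card_ge_0)


lemma zt_def': "zt z s = (if 1 \<le> s \<and> s \<le> int CARD('T) then (z::real^'m::enum^'T::enum) $ ix (nat s) else 0)"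
  by (simp add: zt_def)

lemma zt_nonpos: "s \<le> 0 \<Longrightarrow> zt z s = 0" by (simp add: zt_def)

locale canon =
  fixes A :: "real^('n::enum)^('n::enum)" and B :: "real^('m::enum)^('n::enum)" and k :: "nat \<Rightarrow> nat"
  assumes canon: "canonical_form A B k"
begin

lemma k0: "k 0 = 0" using canon by (simp add: canonical_form_def)
lemma kstep: "i < CARD('m) \<Longrightarrow> k i < k (Suc i)" using canon by (simp add: canonical_form_def)
lemma km: "k CARD('m) = CARD('n)" using canon by (simp add: canonical_form_def)
lemma Arow: "i \<in> {1..CARD('n)} \<Longrightarrow> i \<notin> k ` {1..CARD('m)} \<Longrightarrow> j \<in> {1..CARD('n)} \<Longrightarrow>
   A $ ix i $ ix j = (if j = i + 1 then 1 else 0)"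
  using canon by (simp add: canonical_form_def)
lemma Bent: "i \<in> {1..CARD('n)} \<Longrightarrow> j \<in> {1..CARD('m)} \<Longrightarrow> B $ ix i $ ix j = (if i = k j then 1 else 0)"
  using canon by (simp add: canonical_form_def)

lemma k_less: "a < b \<Longrightarrow> b \<le> CARD('m) \<Longrightarrow> k a < k b"
proof (induction b)
  case 0 then show ?case by simp
next
  case (Suc b)
  have s: "k b < k (Suc b)" using kstep Suc by simp
  show ?case
  proof (cases "a = b")
    case True then show ?thesis using s by simp
  next
    case False then show ?thesis using Suc s by (meson less_SucE less_trans Suc_leD)
  qed
qed

lemma k_le: "a \<le> b \<Longrightarrow> b \<le> CARD('m) \<Longrightarrow> k a \<le> k b"
  using k_less by (metis le_less)

lemma k_inj: "a \<le> CARD('m) \<Longrightarrow> b \<le> CARD('m) \<Longrightarrow> k a = k b \<Longrightarrow> a = b"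
  using k_less by (metis less_irrefl nat_neq_iff)


lemma blk_unique: "j \<in> {1..CARD('m)} \<Longrightarrow> k (j - 1) < i \<Longrightarrow> i \<le> k j \<Longrightarrow>
   j' \<in> {1..CARD('m)} \<Longrightarrow> k (j' - 1) < i \<Longrightarrow> i \<le> k j' \<Longrightarrow> j = j'"
proof (rule ccontr)
  assume a: "j \<in> {1..CARD('m)}" "k (j - 1) < i" "i \<le> k j" "j' \<in> {1..CARD('m)}" "k (j' - 1) < i" "i \<le> k j'" "j \<noteq> j'"
  show False
  proof (cases "j < j'")
    case True
    then have "k j \<le> k (j' - 1)" using a by (intro k_le) auto
    then show False using a by linarith
  next
    case False
    then have "k j' \<le> k (j - 1)" using a by (intro k_le) auto
    then show False using a by linarith
  qed
qed

lemma blk_spec: assumes i: "i \<in> {1..CARD('n)}"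
  shows "blk k CARD('m) i \<in> {1..CARD('m)} \<and> k (blk k CARD('m) i - 1) < i \<and> i \<le> k (blk k CARD('m) i)"
proof -
  define j where "j = (LEAST j. i \<le> k j)"
  have ex: "i \<le> k CARD('m)" using i km by simp
  have j1: "i \<le> k j" unfolding j_def by (rule LeastI[of _ "CARD('m)"]) (rule ex)
  have j2: "j \<le> CARD('m)" unfolding j_def by (rule Least_le) (rule ex)
  have j0: "j \<noteq> 0" using j1 k0 i by (cases "j = 0") auto
  have j3: "k (j - 1) < i"
  proof -
    have "\<not> i \<le> k (j - 1)" unfolding j_def
      by (rule not_less_Least) (use j0 in \<open>simp add: j_def\<close>)
    then show ?thesis by simp
  qed
  have P: "j \<in> {1..CARD('m)} \<and> k (j - 1) < i \<and> i \<le> k j" using j0 j1 j2 j3 by auto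
  have "blk k CARD('m) i = j" unfolding blk_def
    by (rule the_equality) (use P blk_unique in blast)+
  then show ?thesis using P by simp
qed

lemma blk_eq: "j \<in> {1..CARD('m)} \<Longrightarrow> k (j - 1) < i \<Longrightarrow> i \<le> k j \<Longrightarrow> blk k CARD('m) i = j"
proof -
  assume a: "j \<in> {1..CARD('m)}" "k (j - 1) < i" "i \<le> k j"
  have "i \<in> {1..CARD('n)}" using a k_le[of j "CARD('m)"] km by auto
  then show ?thesis using blk_spec a blk_unique by blast
qed

lemma blk_k: "j \<in> {1..CARD('m)} \<Longrightarrow> blk k CARD('m) (k j) = j"
  by (rule blk_eq) (auto intro: k_less)

lemma k_range: "j \<in> {1..CARD('m)} \<Longrightarrow> k j \<in> {1..CARD('n)}"
  using k_less[of 0 j] k0 k_le[of j "CARD('m)"] km by auto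

lemma notI: assumes "i \<in> {1..CARD('n)}" "i < k (blk k CARD('m) i)" shows "i \<notin> k ` {1..CARD('m)}"
proof
  assume "i \<in> k ` {1..CARD('m)}"
  then obtain j where j: "j \<in> {1..CARD('m)}" "i = k j" by auto
  then have "blk k CARD('m) i = j" using blk_k by simp
  then show False using assms j by simp
qed

lemma next_same_blk: assumes "i \<in> {1..CARD('n)}" "i < k (blk k CARD('m) i)" shows "blk k CARD('m) (i + 1) = blk k CARD('m) i"
  using blk_spec[OF assms(1)] assms by (intro blk_eq) auto

lemma xz_ix: assumes "i \<in> {1..CARD('n)}" shows
  "(xz k (z::real^('m::enum)^('T::enum)) t) $ (ix i :: 'n::enum) = zt z (int t - int (k (blk k CARD('m) i) - i)) $ ix (blk k CARD('m) i)"
proof -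
  have "pos (ix i :: 'n::enum) = i" by (rule pos_ix[OF assms])
  then show ?thesis by (simp add: xz_def Let_def)
qed

lemma Amult_nonI: assumes "i \<in> {1..CARD('n)}" "i \<notin> k ` {1..CARD('m)}"
  shows "(A *v x) $ ix i = x $ ix (i + 1)"
proof -
  have "CARD('n) \<in> k ` {1..CARD('m)}" using km card_ge1[where 'a='m]
    by (metis atLeastAtMost_iff image_eqI order_refl)
  then have "i \<noteq> CARD('n)" using assms(2) by auto
  then have i1: "i + 1 \<in> {1..CARD('n)}" using assms(1) by auto
  have "(A *v x) $ ix i = (\<Sum>j=1..CARD('n). A $ ix i $ ix j * x $ ix j)"
    by (simp add: matrix_vector_mult_def sum_UNIV_ix)
  also have "\<dots> = (\<Sum>j=1..CARD('n). if j = i + 1 then x $ ix j else 0)"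
    by (rule sum.cong) (auto simp: Arow[OF assms])
  also have "\<dots> = x $ ix (i + 1)" using i1 by (simp add: sum.delta)
  finally show ?thesis .
qed

lemma Bmult_nonI: assumes "i \<in> {1..CARD('n)}" "i \<notin> k ` {1..CARD('m)}"
  shows "(B *v u) $ ix i = 0"
proof -
  have "(B *v u) $ ix i = (\<Sum>j=1..CARD('m). B $ ix i $ ix j * u $ ix j)"
    by (simp add: matrix_vector_mult_def sum_UNIV_ix)
  also have "\<dots> = 0"
    by (rule sum.neutral) (use assms in \<open>auto simp: Bent\<close>)
  finally show ?thesis .
qed

lemma Bmult_I: assumes "j \<in> {1..CARD('m)}"
  shows "(B *v u) $ ix (k j) = u $ ix j"
proof -
  have "(B *v u) $ ix (k j) = (\<Sum>j'=1..CARD('m). B $ ix (k j) $ ix j' * u $ ix j')"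
    by (simp add: matrix_vector_mult_def sum_UNIV_ix)
  also have "\<dots> = (\<Sum>j'=1..CARD('m). if j' = j then u $ ix j' else 0)"
    by (rule sum.cong) (use assms k_inj k_range in \<open>auto simp: Bent\<close>)
  also have "\<dots> = u $ ix j" using assms by simp
  finally show ?thesis .
qed

lemma rowsI_mult: assumes "j \<in> {1..CARD('m)}" shows "(rowsI A k *v x) $ (ix j :: 'm::enum) = ((A *v x) $ ix (k j))"
proof -
  have "pos (ix j :: 'm::enum) = j" by (rule pos_ix[OF assms])
  then show ?thesis by (simp add: rowsI_def matrix_vector_mult_def)
qed

lemma entriesI_ix: assumes "j \<in> {1..CARD('m)}" shows "(entriesI x k :: real^('m::enum)) $ ix j = x $ ix (k j)"
proof -
  have "pos (ix j :: 'm::enum) = j" by (rule pos_ix[OF assms])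
  then show ?thesis by (simp add: entriesI_def)
qed

end




context canon begin

lemma traj_xz:
  fixes x :: "nat \<Rightarrow> real^('n::enum)" and u :: "nat \<Rightarrow> real^('m::enum)"
  assumes x0: "x 0 = 0" and dyn: "\<forall>t<CARD('T::enum). x (t + 1) = A *v x t + B *v u t"
  and zdef: "z = ((\<chi> s. entriesI (x (pos s)) k) :: real^('m::enum)^('T::enum))"
  shows "s \<in> {1..CARD('T)} \<Longrightarrow> j \<in> {1..CARD('m)} \<Longrightarrow> zt z (int s) $ ix j = x s $ ix (k j)"
  and "t \<le> CARD('T) \<Longrightarrow> xz k z t = x t"
proof -
  show zz: "zt z (int s) $ ix j = x s $ ix (k j)" if "s \<in> {1..CARD('T)}" "j \<in> {1..CARD('m)}" for s j
  proof -
    have "zt z (int s) = z $ ix s" using that by (simp add: zt_def)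
    also have "\<dots> = entriesI (x s) k" using that by (simp add: zdef pos_ix)
    finally show ?thesis using entriesI_ix[OF that(2)] by simp
  qed
  have main: "\<forall>i\<in>{1..CARD('n)}. x t $ ix i = zt z (int t - int (k (blk k CARD('m) i) - i)) $ ix (blk k CARD('m) i)"
    if "t \<le> CARD('T)" for t
    using that
  proof (induction t)
    case 0 then show ?case using x0 by (simp add: zt_nonpos)
  next
    case (Suc t)
    show ?case
    proof
      fix i assume i: "i \<in> {1..CARD('n)}"
      define j where "j = blk k CARD('m) i"
      have js: "j \<in> {1..CARD('m)}" "k (j - 1) < i" "i \<le> k j" using blk_spec[OF i] j_def by auto
      show "x (Suc t) $ ix i = zt z (int (Suc t) - int (k (blk k CARD('m) i) - i)) $ ix (blk k CARD('m) i)"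
      proof (cases "i = k j")
        case True
        then show ?thesis using zz[of "Suc t" j] Suc.prems js j_def by simp
      next
        case False
        then have lt: "i < k j" using js by simp
        have nI: "i \<notin> k ` {1..CARD('m)}" using notI[OF i] lt j_def by simp
        have "k j \<le> CARD('n)" using k_le[of j "CARD('m)"] js km by simp
        then have i1: "i + 1 \<in> {1..CARD('n)}" using lt by simp
        have b1: "blk k CARD('m) (i+1) = j" using next_same_blk[OF i] lt j_def by simp
        have "x (Suc t) = A *v x t + B *v u t" using dyn Suc.prems by simp
        then have "x (Suc t) $ ix i = (A *v x t + B *v u t) $ ix i" by simp
        also have "\<dots> = x t $ ix (i+1)" using Amult_nonI[OF i nI] Bmult_nonI[OF i nI] by simp
        also have "\<dots> = zt z (int t - int (k j - (i+1))) $ ix j" using Suc.IH Suc.prems i1 b1 by simp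
        also have "int t - int (k j - (i+1)) = int (Suc t) - int (k j - i)" using lt by simp
        finally show ?thesis using j_def by simp
      qed
    qed
  qed
  show "xz k z t = x t" if "t \<le> CARD('T)"
    unfolding vec_eq_ix
  proof
    fix i assume i: "i \<in> {1..CARD('n)}"
    show "(xz k z t :: real^('n::enum)) $ ix i = x t $ ix i" using main[OF that] i by (simp add: xz_ix[OF i])
  qed
qed

lemma traj_uz:
  fixes x :: "nat \<Rightarrow> real^('n::enum)" and u :: "nat \<Rightarrow> real^('m::enum)"
  assumes x0: "x 0 = 0" and dyn: "\<forall>t<CARD('T::enum). x (t + 1) = A *v x t + B *v u t"
  and zdef: "z = ((\<chi> s. entriesI (x (pos s)) k) :: real^('m::enum)^('T::enum))"
  and t: "t < CARD('T)"
  shows "uz A k z t = u t"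
  unfolding vec_eq_ix
proof
  fix j assume j: "j \<in> {1..CARD('m)}"
  have xt: "xz k z t = x t" using traj_xz(2)[OF x0 dyn zdef] t by simp
  have z1: "zt z (int t + 1) $ ix j = x (t+1) $ ix (k j)"
    using traj_xz(1)[OF x0 dyn zdef, of "t+1" j] t j by (simp add: add.commute)
  have "uz A k z t $ ix j = x (t+1) $ ix (k j) - (A *v x t) $ ix (k j)"
    using z1 xt rowsI_mult[OF j] by (simp add: uz_def)
  also have "\<dots> = (B *v u t) $ ix (k j)" using dyn t by simp
  also have "\<dots> = u t $ ix j" by (rule Bmult_I[OF j])
  finally show "uz A k z t $ ix j = u t $ ix j" .
qed

lemma xz_zero: "xz k (z::real^('m::enum)^('T::enum)) 0 = (0::real^('n::enum))"
  unfolding vec_eq_ix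
proof
  fix i assume i: "i \<in> {1..CARD('n)}"
  show "(xz k z 0 :: real^('n::enum)) $ ix i = (0::real^('n::enum)) $ ix i" by (simp add: zt_nonpos xz_ix[OF i])
qed

lemma xz_step: "xz k (z::real^('m::enum)^('T::enum)) (t + 1) = A *v xz k z t + B *v uz A k z t"
  unfolding vec_eq_ix
proof
  fix i assume i: "i \<in> {1..CARD('n)}"
  define j where "j = blk k CARD('m) i"
  have js: "j \<in> {1..CARD('m)}" "k (j - 1) < i" "i \<le> k j" using blk_spec[OF i] j_def by auto
  show "(xz k z (t + 1) :: real^('n::enum)) $ ix i = (A *v xz k z t + B *v uz A k z t) $ ix i"
  proof (cases "i = k j")
    case True
    have "(A *v xz k z t + B *v uz A k z t) $ ix i = (A *v xz k z t) $ ix (k j) + uz A k z t $ ix j"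
      using True Bmult_I[OF js(1)] by simp
    also have "\<dots> = zt z (int t + 1) $ ix j"
      using rowsI_mult[OF js(1)] by (simp add: uz_def)
    also have "\<dots> = zt z (int (t + 1) - int (k j - i)) $ ix j" using True by (simp add: add.commute)
    also have "\<dots> = (xz k z (t + 1) :: real^('n::enum)) $ ix i"
      unfolding j_def by (rule xz_ix[OF i, symmetric])
    finally show ?thesis by (rule sym)
  next
    case False
    then have lt: "i < k j" using js by simp
    have nI: "i \<notin> k ` {1..CARD('m)}" using notI[OF i] lt j_def by simp
    have "k j \<le> CARD('n)" using k_le[of j "CARD('m)"] js km by simp
    then have i1: "i + 1 \<in> {1..CARD('n)}" using lt by simp
    have b1: "blk k CARD('m) (i+1) = j" using next_same_blk[OF i] lt j_def by simp
    have "(A *v xz k z t + B *v uz A k z t) $ ix i = (xz k z t :: real^('n::enum)) $ ix (i+1)"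
      using Amult_nonI[OF i nI] Bmult_nonI[OF i nI] by simp
    also have "\<dots> = zt z (int t - int (k j - (i+1))) $ ix j" unfolding b1[symmetric] by (rule xz_ix[OF i1])
    also have "int t - int (k j - (i+1)) = int (t + 1) - int (k j - i)" using lt by simp
    also have "zt z (int (t + 1) - int (k j - i)) $ ix j = (xz k z (t + 1) :: real^('n::enum)) $ ix i"
      unfolding j_def by (rule xz_ix[OF i, symmetric])
    finally show ?thesis by (rule sym)
  qed
qed

lemma p_ge: assumes "j \<in> {1..CARD('m)}" shows "k j - k (j - 1) \<le> ctrl_index k CARD('m)"
  unfolding ctrl_index_def by (rule Max_ge) (use assms in auto)

lemma local_dep:
  fixes z z' :: "real^('m::enum)^('T::enum)"
  assumes t: "t < CARD('T)"
  and agree: "\<forall>s\<in>{1..CARD('T)}. int t - int (ctrl_index k CARD('m)) + 1 \<le> int s \<and> s \<le> t + 1 \<longrightarrow> z $ ix s = z' $ ix s"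
  shows "xz k z t = (xz k z' t :: real^('n::enum)) \<and> uz A k z t = uz A k z' t"
proof -
  let ?p = "ctrl_index k CARD('m)"
  have zeq: "zt z s = zt z' s" if "int t - int ?p + 1 \<le> s" "s \<le> int t + 1" for s
  proof (cases "1 \<le> s \<and> s \<le> int CARD('T)")
    case True
    then have "nat s \<in> {1..CARD('T)}" "int t - int ?p + 1 \<le> int (nat s)" "nat s \<le> t + 1"
      using that by auto
    then show ?thesis using agree True by (simp add: zt_def)
  next
    case False then show ?thesis unfolding zt_def by auto
  qed
  have xeq: "xz k z t = (xz k z' t :: real^('n::enum))"
    unfolding vec_eq_ix
  proof
    fix i assume i: "i \<in> {1..CARD('n)}"
    define j where "j = blk k CARD('m) i"
    have js: "j \<in> {1..CARD('m)}" "k (j - 1) < i" "i \<le> k j" using blk_spec[OF i] j_def by auto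
    have "k j - i < k j - k (j - 1)" using js by simp
    then have "k j - i < ?p" using p_ge[OF js(1)] by simp
    then have "zt z (int t - int (k j - i)) = zt z' (int t - int (k j - i))"
      by (intro zeq) auto
    then show "(xz k z t :: real^('n::enum)) $ ix i = (xz k z' t :: real^('n::enum)) $ ix i" using j_def by (simp add: xz_ix[OF i])
  qed
  moreover have "zt z (int t + 1) = zt z' (int t + 1)"
  proof (rule zeq)
    have "1 \<le> ?p" using p_ge[of 1] k_less[of 0 1] card_ge1[where 'a='m] by simp
    then show "int t - int ?p + 1 \<le> int t + 1" by simp
  qed simp
  ultimately show ?thesis by (simp add: uz_def)
qed

end




lemma sc_sum:
  fixes X :: "nat \<Rightarrow> 'z::euclidean_space \<Rightarrow> 'x::euclidean_space" and U :: "nat \<Rightarrow> 'z \<Rightarrow> 'u::euclidean_space"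
  assumes fin: "finite I1" "finite I2"
    and linX: "\<And>t. t \<in> I1 \<Longrightarrow> linear (X t)" and linU: "\<And>t. t \<in> I2 \<Longrightarrow> linear (U t)"
    and fsc: "\<And>t. t \<in> I1 \<Longrightarrow> strongly_convex \<mu> (f t)"
    and gcv: "\<And>t. t \<in> I2 \<Longrightarrow> convex_on UNIV (g t)"
    and mu: "\<mu> \<ge> 0"
    and low: "\<And>w. (norm w)\<^sup>2 \<le> (\<Sum>t\<in>I1. (norm (X t w))\<^sup>2)"
  shows "strongly_convex \<mu> (\<lambda>z. (\<Sum>t\<in>I1. f t (X t z)) + (\<Sum>t\<in>I2. g t (U t z)))"
  unfolding strongly_convex_def
proof (intro allI impI)
  fix x y :: 'z and \<theta> :: real
  assume th: "0 \<le> \<theta> \<and> \<theta> \<le> 1"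
  let ?v = "\<theta> *\<^sub>R x + (1 - \<theta>) *\<^sub>R y"
  let ?c = "\<mu> / 2 * \<theta> * (1 - \<theta>)"
  have c0: "?c \<ge> 0" using th mu by simp
  have f1: "f t (X t ?v) \<le> \<theta> * f t (X t x) + (1 - \<theta>) * f t (X t y) - ?c * (norm (X t (x - y)))\<^sup>2"
    if t: "t \<in> I1" for t
  proof -
    have "X t ?v = \<theta> *\<^sub>R X t x + (1 - \<theta>) *\<^sub>R X t y"
      using linX[OF t] by (simp add: linear_add linear_scale)
    moreover have "X t (x - y) = X t x - X t y" using linX[OF t] by (simp add: linear_diff)
    ultimately show ?thesis using fsc[OF t] th unfolding strongly_convex_def by simp
  qed
  have g1: "g t (U t ?v) \<le> \<theta> * g t (U t x) + (1 - \<theta>) * g t (U t y)"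
    if t: "t \<in> I2" for t
  proof -
    have "U t ?v = (1 - (1 - \<theta>)) *\<^sub>R U t x + (1 - \<theta>) *\<^sub>R U t y"
      using linU[OF t] by (simp add: linear_add linear_scale)
    then have "g t (U t ?v) \<le> (1 - (1 - \<theta>)) * g t (U t x) + (1 - \<theta>) * g t (U t y)"
      using convex_onD[OF gcv[OF t], of "1 - \<theta>" "U t x" "U t y"] th by simp
    then show ?thesis by simp
  qed
  have "(\<Sum>t\<in>I1. f t (X t ?v)) \<le> (\<Sum>t\<in>I1. \<theta> * f t (X t x) + (1 - \<theta>) * f t (X t y) - ?c * (norm (X t (x - y)))\<^sup>2)"
    by (rule sum_mono) (rule f1)
  also have "\<dots> = \<theta> * (\<Sum>t\<in>I1. f t (X t x)) + (1 - \<theta>) * (\<Sum>t\<in>I1. f t (X t y)) - ?c * (\<Sum>t\<in>I1. (norm (X t (x - y)))\<^sup>2)"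
    by (simp add: sum.distrib sum_subtractf sum_distrib_left)
  also have "\<dots> \<le> \<theta> * (\<Sum>t\<in>I1. f t (X t x)) + (1 - \<theta>) * (\<Sum>t\<in>I1. f t (X t y)) - ?c * (norm (x - y))\<^sup>2"
    using mult_left_mono[OF low[of "x - y"] c0] by linarith
  finally have F: "(\<Sum>t\<in>I1. f t (X t ?v)) \<le> \<theta> * (\<Sum>t\<in>I1. f t (X t x)) + (1 - \<theta>) * (\<Sum>t\<in>I1. f t (X t y)) - ?c * (norm (x - y))\<^sup>2" .
  have "(\<Sum>t\<in>I2. g t (U t ?v)) \<le> (\<Sum>t\<in>I2. \<theta> * g t (U t x) + (1 - \<theta>) * g t (U t y))"
    by (rule sum_mono) (rule g1)
  also have "\<dots> = \<theta> * (\<Sum>t\<in>I2. g t (U t x)) + (1 - \<theta>) * (\<Sum>t\<in>I2. g t (U t y))"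
    by (simp add: sum.distrib sum_distrib_left)
  finally have G: "(\<Sum>t\<in>I2. g t (U t ?v)) \<le> \<theta> * (\<Sum>t\<in>I2. g t (U t x)) + (1 - \<theta>) * (\<Sum>t\<in>I2. g t (U t y))" .
  show "(\<Sum>t\<in>I1. f t (X t ?v)) + (\<Sum>t\<in>I2. g t (U t ?v))
        \<le> \<theta> * ((\<Sum>t\<in>I1. f t (X t x)) + (\<Sum>t\<in>I2. g t (U t x))) + (1 - \<theta>) * ((\<Sum>t\<in>I1. f t (X t y)) + (\<Sum>t\<in>I2. g t (U t y)))
          - \<mu> / 2 * \<theta> * (1 - \<theta>) * (norm (x - y))\<^sup>2"
    using F G by (simp add: algebra_simps)
qed

lemma cs_bound:
  fixes X :: "nat \<Rightarrow> 'z::real_normed_vector \<Rightarrow> 'x::real_normed_vector"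
  assumes up: "\<And>w. (\<Sum>t\<in>I. (norm (X t w))\<^sup>2) \<le> P * (norm w)\<^sup>2" and P: "P \<ge> 0"
  shows "(\<Sum>t\<in>I. norm (X t v) * norm (X t d)) \<le> P * norm v * norm d"
proof -
  have "(\<Sum>t\<in>I. norm (X t v) * norm (X t d))\<^sup>2 \<le> (\<Sum>t\<in>I. (norm (X t v))\<^sup>2) * (\<Sum>t\<in>I. (norm (X t d))\<^sup>2)"
    by (rule Cauchy_Schwarz_ineq_sum)
  also have "\<dots> \<le> (P * (norm v)\<^sup>2) * (P * (norm d)\<^sup>2)"
    by (rule mult_mono[OF up up]) (use P in \<open>auto intro: sum_nonneg\<close>)
  also have "\<dots> = (P * norm v * norm d)\<^sup>2" by (simp add: power2_eq_square)
  finally show ?thesis by (rule power2_le_imp_le) (use P in simp)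
qed

lemma smooth_sum:
  fixes X :: "nat \<Rightarrow> 'z::euclidean_space \<Rightarrow> 'x::euclidean_space" and U :: "nat \<Rightarrow> 'z \<Rightarrow> 'u::euclidean_space"
  assumes fin: "finite I1" "finite I2"
    and linX: "\<And>t. t \<in> I1 \<Longrightarrow> linear (X t)" and linU: "\<And>t. t \<in> I2 \<Longrightarrow> linear (U t)"
    and fsm: "\<And>t. t \<in> I1 \<Longrightarrow> smooth a (f t)"
    and gsm: "\<And>t. t \<in> I2 \<Longrightarrow> smooth c (g t)"
    and a: "a \<ge> 0" and c: "c \<ge> 0" and P: "P \<ge> 0" and Q: "Q \<ge> 0"
    and upX: "\<And>w. (\<Sum>t\<in>I1. (norm (X t w))\<^sup>2) \<le> P * (norm w)\<^sup>2"
    and upU: "\<And>w. (\<Sum>t\<in>I2. (norm (U t w))\<^sup>2) \<le> Q * (norm w)\<^sup>2"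
  shows "smooth (a * P + c * Q) (\<lambda>z. (\<Sum>t\<in>I1. f t (X t z)) + (\<Sum>t\<in>I2. g t (U t z)))"
proof -
  have "\<forall>t\<in>I1. \<exists>G. (\<forall>x. (f t has_derivative (\<lambda>h. G x \<bullet> h)) (at x)) \<and> (\<forall>x y. norm (G x - G y) \<le> a * norm (x - y))"
    using fsm unfolding smooth_def by blast
  then obtain Gf where Gf: "\<And>t x. t \<in> I1 \<Longrightarrow> (f t has_derivative (\<lambda>h. Gf t x \<bullet> h)) (at x)"
    "\<And>t x y. t \<in> I1 \<Longrightarrow> norm (Gf t x - Gf t y) \<le> a * norm (x - y)"
    by metis
  have "\<forall>t\<in>I2. \<exists>G. (\<forall>x. (g t has_derivative (\<lambda>h. G x \<bullet> h)) (at x)) \<and> (\<forall>x y. norm (G x - G y) \<le> c * norm (x - y))"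
    using gsm unfolding smooth_def by blast
  then obtain Gg where Gg: "\<And>t x. t \<in> I2 \<Longrightarrow> (g t has_derivative (\<lambda>h. Gg t x \<bullet> h)) (at x)"
    "\<And>t x y. t \<in> I2 \<Longrightarrow> norm (Gg t x - Gg t y) \<le> c * norm (x - y)"
    by metis
  define G where "G z = (\<Sum>t\<in>I1. adjoint (X t) (Gf t (X t z))) + (\<Sum>t\<in>I2. adjoint (U t) (Gg t (U t z)))" for z
  have Gin: "h \<bullet> G z = (\<Sum>t\<in>I1. X t h \<bullet> Gf t (X t z)) + (\<Sum>t\<in>I2. U t h \<bullet> Gg t (U t z))" for h z
    unfolding G_def inner_add_right inner_sum_right
    by (intro arg_cong2[where f="(+)"] sum.cong) (auto simp: adjoint_works linX linU)
  have deriv: "((\<lambda>z. (\<Sum>t\<in>I1. f t (X t z)) + (\<Sum>t\<in>I2. g t (U t z))) has_derivative (\<lambda>h. G z \<bullet> h)) (at z)" for z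
  proof -
    have dX: "((\<lambda>z. f t (X t z)) has_derivative (\<lambda>h. Gf t (X t z) \<bullet> X t h)) (at z)" if t: "t \<in> I1" for t
      using diff_chain_at[OF linear_imp_has_derivative[OF linX[OF t]] Gf(1)[OF t, of "X t z"]]
      by (simp add: o_def)
    have dU: "((\<lambda>z. g t (U t z)) has_derivative (\<lambda>h. Gg t (U t z) \<bullet> U t h)) (at z)" if t: "t \<in> I2" for t
      using diff_chain_at[OF linear_imp_has_derivative[OF linU[OF t]] Gg(1)[OF t, of "U t z"]]
      by (simp add: o_def)
    have "((\<lambda>z. (\<Sum>t\<in>I1. f t (X t z)) + (\<Sum>t\<in>I2. g t (U t z))) has_derivative
          (\<lambda>h. (\<Sum>t\<in>I1. Gf t (X t z) \<bullet> X t h) + (\<Sum>t\<in>I2. Gg t (U t z) \<bullet> U t h))) (at z)"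
      by (intro has_derivative_add has_derivative_sum dX dU)
    moreover have "(\<lambda>h. (\<Sum>t\<in>I1. Gf t (X t z) \<bullet> X t h) + (\<Sum>t\<in>I2. Gg t (U t z) \<bullet> U t h)) = (\<lambda>h. G z \<bullet> h)"
      using Gin by (simp add: inner_commute)
    ultimately show ?thesis by simp
  qed
  have lip: "norm (G z - G z') \<le> (a * P + c * Q) * norm (z - z')" for z z'
  proof -
    define v where "v = G z - G z'"
    define d where "d = z - z'"
    have "(norm v)\<^sup>2 = v \<bullet> G z - v \<bullet> G z'" unfolding v_def by (simp add: power2_norm_eq_inner inner_diff_right)
    also have "\<dots> = (\<Sum>t\<in>I1. X t v \<bullet> (Gf t (X t z) - Gf t (X t z'))) + (\<Sum>t\<in>I2. U t v \<bullet> (Gg t (U t z) - Gg t (U t z')))"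
      unfolding Gin by (simp add: inner_diff_right sum_subtractf)
    also have "\<dots> \<le> (\<Sum>t\<in>I1. norm (X t v) * (a * norm (X t d))) + (\<Sum>t\<in>I2. norm (U t v) * (c * norm (U t d)))"
    proof (rule add_mono; rule sum_mono)
      fix t assume t: "t \<in> I1"
      have e: "X t z - X t z' = X t d" unfolding d_def using linX[OF t] by (simp add: linear_diff)
      have "X t v \<bullet> (Gf t (X t z) - Gf t (X t z')) \<le> norm (X t v) * norm (Gf t (X t z) - Gf t (X t z'))"
        by (rule norm_cauchy_schwarz)
      also have "\<dots> \<le> norm (X t v) * (a * norm (X t d))"
        using Gf(2)[OF t, of "X t z" "X t z'"] e by (simp add: mult_left_mono)
      finally show "X t v \<bullet> (Gf t (X t z) - Gf t (X t z')) \<le> norm (X t v) * (a * norm (X t d))" .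
    next
      fix t assume t: "t \<in> I2"
      have e: "U t z - U t z' = U t d" unfolding d_def using linU[OF t] by (simp add: linear_diff)
      have "U t v \<bullet> (Gg t (U t z) - Gg t (U t z')) \<le> norm (U t v) * norm (Gg t (U t z) - Gg t (U t z'))"
        by (rule norm_cauchy_schwarz)
      also have "\<dots> \<le> norm (U t v) * (c * norm (U t d))"
        using Gg(2)[OF t, of "U t z" "U t z'"] e by (simp add: mult_left_mono)
      finally show "U t v \<bullet> (Gg t (U t z) - Gg t (U t z')) \<le> norm (U t v) * (c * norm (U t d))" .
    qed
    also have "\<dots> = a * (\<Sum>t\<in>I1. norm (X t v) * norm (X t d)) + c * (\<Sum>t\<in>I2. norm (U t v) * norm (U t d))"
      by (simp add: sum_distrib_left algebra_simps)
    also have "\<dots> \<le> a * (P * norm v * norm d) + c * (Q * norm v * norm d)"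
      by (intro add_mono mult_left_mono cs_bound[OF upX P] cs_bound[OF upU Q] a c)
    also have "\<dots> = ((a * P + c * Q) * norm d) * norm v" by (simp add: algebra_simps)
    finally have *: "norm v * norm v \<le> ((a * P + c * Q) * norm d) * norm v" by (simp add: power2_eq_square)
    have "norm v \<le> (a * P + c * Q) * norm d"
    proof (cases "norm v = 0")
      case True then show ?thesis using a c P Q by simp
    next
      case False then show ?thesis using * by (simp add: mult_le_cancel_right)
    qed
    then show ?thesis unfolding v_def d_def .
  qed
  show ?thesis unfolding smooth_def using deriv lip by blast
qed




lemma zt_add: "zt (z + w) s = zt z s + zt w s"
  by (simp add: zt_def)
lemma zt_scale: "zt (c *\<^sub>R z) s = c *\<^sub>R zt z s"
  by (simp add: zt_def)

lemma xz_linear: "linear (\<lambda>z::real^('m::enum)^('T::enum). (xz k z t :: real^('n::enum)))"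
  by (rule linearI) (simp_all add: xz_def zt_add zt_scale Let_def vec_eq_iff)

lemma uz_linear: "linear (\<lambda>z::real^('m::enum)^('T::enum). uz (A::real^('n::enum)^('n::enum)) k z t)"
proof -
  have a: "xz k (z + w) t = (xz k z t :: real^('n::enum)) + xz k w t" for z w :: "real^('m::enum)^('T::enum)"
    using linear_add[OF xz_linear] by blast
  have s: "xz k (c *\<^sub>R z) t = c *\<^sub>R (xz k z t :: real^('n::enum))" for c and z :: "real^('m::enum)^('T::enum)"
    using linear_scale[OF xz_linear] by blast
  show ?thesis
    by (rule linearI) (simp_all add: uz_def zt_add zt_scale a s matrix_vector_right_distrib matrix_vector_mult_scaleR algebra_simps)
qed

lemma xz_zero_gen: "xz k (z::real^('m::enum)^('T::enum)) 0 = (0::real^('a::enum))"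
  by (simp add: vec_eq_iff xz_def Let_def zt_nonpos)

lemma norm2_vec: "(norm (x::('b::real_inner)^('a::enum)))\<^sup>2 = (\<Sum>i=1..CARD('a). (norm (x $ ix i))\<^sup>2)"
  by (simp add: power2_norm_eq_inner inner_vec_def sum_UNIV_ix)

lemma normw: "(norm (w::real^('m::enum)^('T::enum)))\<^sup>2 = (\<Sum>j=1..CARD('m). \<Sum>s=1..CARD('T). (w $ ix s $ ix j)\<^sup>2)"
  by (simp add: norm2_vec) (rule sum.swap)

lemma shift_le: "(\<Sum>t=0..CARD('T). (zt (w::real^('m::enum)^('T::enum)) (int t - int d) $ a)\<^sup>2) \<le> (\<Sum>s=1..CARD('T). (w $ ix s $ a)\<^sup>2)"
proof -
  define F where "F s = (zt w s $ a)\<^sup>2" for s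
  define \<phi> where "\<phi> t = int t - int d" for t
  define S where "S = int ` {1..CARD('T)}"
  have zero: "F s = 0" if "s \<notin> S" for s
  proof -
    have "\<not> (1 \<le> s \<and> s \<le> int CARD('T))"
    proof
      assume h: "1 \<le> s \<and> s \<le> int CARD('T)"
      then have "nat s \<in> {1..CARD('T)}" by auto
      moreover have "s = int (nat s)" using h by simp
      ultimately show False using that unfolding S_def by blast
    qed
    then show ?thesis unfolding F_def zt_def by auto
  qed
  have inj: "inj_on \<phi> {0..CARD('T)}" by (simp add: inj_on_def \<phi>_def)
  have "(\<Sum>t=0..CARD('T). (zt w (int t - int d) $ a)\<^sup>2) = (\<Sum>s\<in>\<phi> ` {0..CARD('T)}. F s)"
    by (subst sum.reindex[OF inj]) (simp add: F_def \<phi>_def o_def)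
  also have "\<dots> \<le> (\<Sum>s\<in>\<phi> ` {0..CARD('T)} \<union> S. F s)"
    by (rule sum_mono2) (auto simp: S_def F_def)
  also have "\<dots> = (\<Sum>s\<in>S. F s)"
    by (rule sum.mono_neutral_left[symmetric]) (auto simp: S_def zero)
  also have "\<dots> = (\<Sum>s=1..CARD('T). F (int s))"
    unfolding S_def by (simp add: sum.reindex)
  also have "\<dots> = (\<Sum>s=1..CARD('T). (w $ ix s $ a)\<^sup>2)"
    by (rule sum.cong) (auto simp: F_def zt_def)
  finally show ?thesis .
qed

lemma shift_ge0: "(\<Sum>s=1..CARD('T). (w $ ix s $ a)\<^sup>2) \<le> (\<Sum>t=0..CARD('T). (zt (w::real^('m::enum)^('T::enum)) (int t) $ a)\<^sup>2)"
proof -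
  have "(\<Sum>s=1..CARD('T). (w $ ix s $ a)\<^sup>2) = (\<Sum>t=1..CARD('T). (zt w (int t) $ a)\<^sup>2)"
    by (rule sum.cong) (auto simp: zt_def)
  also have "\<dots> \<le> (\<Sum>t=0..CARD('T). (zt w (int t) $ a)\<^sup>2)"
    by (rule sum_mono2) auto
  finally show ?thesis .
qed

context canon begin

lemma normx: "(norm (xz k (w::real^('m::enum)^('T::enum)) t :: real^('n::enum)))\<^sup>2
   = (\<Sum>i=1..CARD('n). (zt w (int t - int (k (blk k CARD('m) i) - i)) $ ix (blk k CARD('m) i))\<^sup>2)"
  unfolding norm2_vec by (intro sum.cong) (auto simp: xz_ix)

lemma block_sum: assumes h: "\<And>j. h j \<ge> (0::real)"
  shows "(\<Sum>i=1..CARD('n). h (blk k CARD('m) i)) \<le> real (ctrl_index k CARD('m)) * (\<Sum>j=1..CARD('m). h j)"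
proof -
  let ?b = "blk k CARD('m)"
  let ?p = "ctrl_index k CARD('m)"
  have img: "?b ` {1..CARD('n)} \<subseteq> {1..CARD('m)}" using blk_spec by blast
  have "(\<Sum>i=1..CARD('n). h (?b i)) = (\<Sum>j=1..CARD('m). \<Sum>i\<in>{x. x \<in> {1..CARD('n)} \<and> ?b x = j}. h (?b i))"
    by (rule sum.group[symmetric]) (use img in \<open>auto simp: image_subset_iff\<close>)
  also have "\<dots> = (\<Sum>j=1..CARD('m). real (card {x. x \<in> {1..CARD('n)} \<and> ?b x = j}) * h j)"
    by (rule sum.cong) auto
  also have "\<dots> \<le> (\<Sum>j=1..CARD('m). real ?p * h j)"
  proof (rule sum_mono)
    fix j assume j: "j \<in> {1..CARD('m)}"
    have "{x. x \<in> {1..CARD('n)} \<and> ?b x = j} \<subseteq> {k (j - 1)<..k j}" using blk_spec by auto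
    then have "card {x. x \<in> {1..CARD('n)} \<and> ?b x = j} \<le> card {k (j - 1)<..k j}"
      by (intro card_mono) auto
    also have "\<dots> \<le> ?p" using p_ge[OF j] by simp
    finally show "real (card {x. x \<in> {1..CARD('n)} \<and> ?b x = j}) * h j \<le> real ?p * h j"
      by (intro mult_right_mono h) simp
  qed
  also have "\<dots> = real ?p * (\<Sum>j=1..CARD('m). h j)" by (simp add: sum_distrib_left)
  finally show ?thesis .
qed

lemma Q1: "(\<Sum>t=0..CARD('T). (norm (xz k (w::real^('m::enum)^('T::enum)) t :: real^('n::enum)))\<^sup>2)
   \<le> real (ctrl_index k CARD('m)) * (norm w)\<^sup>2"
proof -
  let ?b = "blk k CARD('m)"
  have "(\<Sum>t=0..CARD('T). (norm (xz k w t :: real^('n::enum)))\<^sup>2)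
      = (\<Sum>i=1..CARD('n). \<Sum>t=0..CARD('T). (zt w (int t - int (k (?b i) - i)) $ ix (?b i))\<^sup>2)"
    unfolding normx by (rule sum.swap)
  also have "\<dots> \<le> (\<Sum>i=1..CARD('n). \<Sum>s=1..CARD('T). (w $ ix s $ ix (?b i))\<^sup>2)"
    by (rule sum_mono) (rule shift_le)
  also have "\<dots> \<le> real (ctrl_index k CARD('m)) * (\<Sum>j=1..CARD('m). \<Sum>s=1..CARD('T). (w $ ix s $ ix j)\<^sup>2)"
    by (rule block_sum[where h="\<lambda>j. \<Sum>s=1..CARD('T). (w $ ix s $ ix j)\<^sup>2"]) (simp add: sum_nonneg)
  finally show ?thesis by (simp add: normw)
qed

lemma Q3: "(norm w)\<^sup>2 \<le> (\<Sum>t=0..CARD('T). (norm (xz k (w::real^('m::enum)^('T::enum)) t :: real^('n::enum)))\<^sup>2)"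
proof -
  let ?b = "blk k CARD('m)"
  define F where "F i = (\<Sum>t=0..CARD('T). (zt w (int t - int (k (?b i) - i)) $ ix (?b i))\<^sup>2)" for i
  have injk: "inj_on k {1..CARD('m)}" using k_inj by (auto simp: inj_on_def)
  have "(norm w)\<^sup>2 = (\<Sum>j=1..CARD('m). \<Sum>s=1..CARD('T). (w $ ix s $ ix j)\<^sup>2)" by (rule normw)
  also have "\<dots> \<le> (\<Sum>j=1..CARD('m). \<Sum>t=0..CARD('T). (zt w (int t) $ ix j)\<^sup>2)"
    by (rule sum_mono) (rule shift_ge0)
  also have "\<dots> = (\<Sum>j=1..CARD('m). F (k j))"
    by (rule sum.cong) (auto simp: F_def blk_k)
  also have "\<dots> = (\<Sum>i\<in>k ` {1..CARD('m)}. F i)" by (subst sum.reindex[OF injk]) (simp add: o_def)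
  also have "\<dots> \<le> (\<Sum>i=1..CARD('n). F i)"
  proof (rule sum_mono2)
    show "k ` {1..CARD('m)} \<subseteq> {1..CARD('n)}" using k_range by blast
  qed (auto simp: F_def sum_nonneg)
  also have "\<dots> = (\<Sum>t=0..CARD('T). (norm (xz k w t :: real^('n::enum)))\<^sup>2)"
    unfolding normx F_def by (rule sum.swap)
  finally show ?thesis .
qed

lemma Q2:
  defines "M \<equiv> (\<lambda>vw::(real^('m::enum)) \<times> (real^('n::enum)). fst vw - rowsI A k *v snd vw)"
  shows "(\<Sum>t<CARD('T). (norm (uz A k (w::real^('m::enum)^('T::enum)) t))\<^sup>2)
     \<le> ((onorm M)\<^sup>2 * real (ctrl_index k CARD('m) + 1)) * (norm w)\<^sup>2"
proof -
  let ?p = "ctrl_index k CARD('m)"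
  let ?K = "onorm M"
  have "linear M" by (rule linearI) (auto simp: M_def algebra_simps matrix_vector_right_distrib matrix_vector_mult_scaleR)
  then have bl: "bounded_linear M" using linear_conv_bounded_linear by blast
  have K0: "?K \<ge> 0" by (rule onorm_pos_le[OF bl])
  have each: "(norm (uz A k w t))\<^sup>2 \<le> ?K\<^sup>2 * ((norm (zt w (int t + 1)))\<^sup>2 + (norm (xz k w t :: real^('n::enum)))\<^sup>2)" for t
  proof -
    have "uz A k w t = M (zt w (int t + 1), xz k w t)" by (simp add: M_def uz_def)
    then have "norm (uz A k w t) \<le> ?K * norm (zt w (int t + 1), xz k w t :: real^('n::enum))"
      using onorm[OF bl] by simp
    then have "(norm (uz A k w t))\<^sup>2 \<le> (?K * norm (zt w (int t + 1), xz k w t :: real^('n::enum)))\<^sup>2"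
      by (rule power_mono) simp
    then show ?thesis by (simp add: power_mult_distrib norm_Pair)
  qed
  have zsum: "(\<Sum>t<CARD('T). (norm (zt w (int t + 1)))\<^sup>2) = (norm w)\<^sup>2"
  proof -
    have "(norm w)\<^sup>2 = (\<Sum>s=Suc 0..CARD('T). (norm (w $ ix s))\<^sup>2)" by (simp add: norm2_vec)
    also have "\<dots> = (\<Sum>t<CARD('T). (norm (w $ ix (Suc t)))\<^sup>2)" by (rule sum.atLeast1_atMost_eq)
    also have "\<dots> = (\<Sum>t<CARD('T). (norm (zt w (int t + 1)))\<^sup>2)"
      by (rule sum.cong) (auto simp: zt_def nat_add_distrib)
    finally show ?thesis by simp
  qed
  have xsum: "(\<Sum>t<CARD('T). (norm (xz k w t :: real^('n::enum)))\<^sup>2) \<le> real ?p * (norm w)\<^sup>2"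
  proof -
    have "(\<Sum>t<CARD('T). (norm (xz k w t :: real^('n::enum)))\<^sup>2) \<le> (\<Sum>t=0..CARD('T). (norm (xz k w t :: real^('n::enum)))\<^sup>2)"
      by (rule sum_mono2) auto
    then show ?thesis using Q1[of w] by linarith
  qed
  have "(\<Sum>t<CARD('T). (norm (uz A k w t))\<^sup>2) \<le> (\<Sum>t<CARD('T). ?K\<^sup>2 * ((norm (zt w (int t + 1)))\<^sup>2 + (norm (xz k w t :: real^('n::enum)))\<^sup>2))"
    by (rule sum_mono) (rule each)
  also have "\<dots> = ?K\<^sup>2 * ((\<Sum>t<CARD('T). (norm (zt w (int t + 1)))\<^sup>2) + (\<Sum>t<CARD('T). (norm (xz k w t :: real^('n::enum)))\<^sup>2))"
    by (simp add: sum_distrib_left sum.distrib distrib_left)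
  also have "\<dots> \<le> ?K\<^sup>2 * ((norm w)\<^sup>2 + real ?p * (norm w)\<^sup>2)"
    using zsum xsum by (intro mult_left_mono) auto
  also have "\<dots> = (?K\<^sup>2 * real (?p + 1)) * (norm w)\<^sup>2" by (simp add: algebra_simps)
  finally show ?thesis .
qed

end




lemma Jcost_eq: "Jcost N f g x u = (\<Sum>t=0..N. f t (x t)) + (\<Sum>t<N. g t (u t))"
  unfolding Jcost_def by (simp add: sum.distrib atLeast0AtMost lessThan_Suc_atMost[symmetric])

theorem lemma1:
  fixes A :: "real^('n::enum)^('n::enum)" and B :: "real^('m::enum)^('n::enum)" and k :: "nat \<Rightarrow> nat"
    and f :: "nat \<Rightarrow> real^('n::enum) \<Rightarrow> real" and g :: "nat \<Rightarrow> real^('m::enum) \<Rightarrow> real"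
    and \<mu>f lf lg \<theta>bar \<xi>bar :: real
  defines "N \<equiv> CARD(('T::enum))"
  defines "p \<equiv> ctrl_index k CARD(('m::enum))"
  defines "C \<equiv> (Cz f g A k :: real^('m::enum)^('T::enum) \<Rightarrow> real)"
  assumes canon: "canonical_form A B k"
    and pos: "\<mu>f > 0" "lf > 0" "lg > 0"
    and f_sc: "\<And>t. t \<le> N \<Longrightarrow> strongly_convex \<mu>f (f t)"
    and f_sm: "\<And>t. t \<le> N \<Longrightarrow> smooth lf (f t)"
    and g_cv: "\<And>t. t < N \<Longrightarrow> convex_on UNIV (g t)"
    and g_sm: "\<And>t. t < N \<Longrightarrow> smooth lg (g t)"
    and f_min: "\<And>t. t \<le> N \<Longrightarrow> \<exists>\<theta>. (\<forall>x. f t \<theta> \<le> f t x) \<and> norm \<theta> \<le> \<theta>bar"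
    and g_min: "\<And>t. t < N \<Longrightarrow> \<exists>\<xi>. (\<forall>v. g t \<xi> \<le> g t v) \<and> norm \<xi> \<le> \<xi>bar"
  shows
    "strongly_convex \<mu>f C
     \<and> smooth (real p * lf + real (p + 1) * lg
                 * (onorm (\<lambda>vw::(real^('m::enum)) \<times> (real^('n::enum)). fst vw - rowsI A k *v snd vw))\<^sup>2) C
     \<and> (\<forall>x u. x 0 = 0 \<and> (\<forall>t<N. x (t + 1) = A *v x t + B *v u t) \<longrightarrow>
          (let z = (\<chi> s. entriesI (x (pos s)) k) :: real^('m::enum)^('T::enum) in
             (\<forall>t\<le>N. xz k z t = x t) \<and> (\<forall>t<N. uz A k z t = u t)
             \<and> C z = Jcost N f g x u))
     \<and> (\<forall>z::real^('m::enum)^('T::enum). xz k z 0 = 0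
          \<and> (\<forall>t<N. xz k z (t + 1) = A *v xz k z t + B *v uz A k z t)
          \<and> Jcost N f g (xz k z) (uz A k z) = C z)
     \<and> (\<forall>t<N. \<forall>(z::real^('m::enum)^('T::enum)) z'::real^('m::enum)^('T::enum).
          (\<forall>s\<in>{1..N}. int t - int p + 1 \<le> int s \<and> s \<le> t + 1 \<longrightarrow> z $ ix s = z' $ ix s) \<longrightarrow>
          f t (xz k z t) + g t (uz A k z t) = f t (xz k z' t) + g t (uz A k z' t))"
proof -
  interpret c: canon A B k by (rule canon.intro[OF canon])
  have Ceq: "C = (\<lambda>z::real^('m::enum)^('T::enum). (\<Sum>t=0..N. f t (xz k z t)) + (\<Sum>t<N. g t (uz A k z t)))"
    unfolding C_def N_def by (rule ext) (simp add: Cz_def)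
  have linX: "linear (\<lambda>z::real^('m::enum)^('T::enum). (xz k z t :: real^('n::enum)))" for t
    by (rule xz_linear)
  have linU: "linear (\<lambda>z::real^('m::enum)^('T::enum). uz A k z t)" for t
    by (rule uz_linear)
  have SC: "strongly_convex \<mu>f C"
    unfolding Ceq
    by (rule sc_sum[where X="\<lambda>t z. xz k z t" and U="\<lambda>t z. uz A k z t", simplified])
       (use linX linU f_sc g_cv pos c.Q3 in \<open>auto simp: N_def\<close>)
  define K where "K = onorm (\<lambda>vw::(real^('m::enum)) \<times> (real^('n::enum)). fst vw - rowsI A k *v snd vw)"
  have SM0: "smooth (lf * real p + lg * (K\<^sup>2 * real (p + 1))) C"
    unfolding Ceq
    by (rule smooth_sum[where X="\<lambda>t z. xz k z t" and U="\<lambda>t z. uz A k z t", simplified])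
       (use linX linU f_sm g_sm pos c.Q1 c.Q2 in \<open>auto simp: N_def p_def K_def\<close>)
  have SM: "smooth (real p * lf + real (p + 1) * lg
                 * (onorm (\<lambda>vw::(real^('m::enum)) \<times> (real^('n::enum)). fst vw - rowsI A k *v snd vw))\<^sup>2) C"
  proof -
    have eq: "lf * real p + lg * (K\<^sup>2 * real (p + 1)) = real p * lf + real (p + 1) * lg * K\<^sup>2"
      by (simp only: mult.commute mult.left_commute mult.assoc)
    have "smooth (real p * lf + real (p + 1) * lg * K\<^sup>2) C" using SM0 unfolding eq .
    then show ?thesis unfolding K_def .
  qed
  have P2: "\<forall>x u. x 0 = 0 \<and> (\<forall>t<N. x (t + 1) = A *v x t + B *v u t) \<longrightarrow>
          (let z = (\<chi> s. entriesI (x (pos s)) k) :: real^('m::enum)^('T::enum) in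
             (\<forall>t\<le>N. xz k z t = x t) \<and> (\<forall>t<N. uz A k z t = u t)
             \<and> C z = Jcost N f g x u)"
  proof (intro allI impI)
    fix x :: "nat \<Rightarrow> real^('n::enum)" and u :: "nat \<Rightarrow> real^('m::enum)"
    assume h: "x 0 = 0 \<and> (\<forall>t<N. x (t + 1) = A *v x t + B *v u t)"
    define z where "z = ((\<chi> s. entriesI (x (pos s)) k) :: real^('m::enum)^('T::enum))"
    have x0: "x 0 = 0" and dyn: "\<forall>t<CARD('T). x (t + 1) = A *v x t + B *v u t" using h by (auto simp: N_def)
    have X: "\<forall>t\<le>N. xz k z t = x t" using c.traj_xz(2)[OF x0 dyn z_def] by (simp add: N_def)
    have U: "\<forall>t<N. uz A k z t = u t" using c.traj_uz[OF x0 dyn z_def] by (simp add: N_def)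
    have "C z = (\<Sum>t=0..N. f t (x t)) + (\<Sum>t<N. g t (u t))"
      unfolding Ceq using X U by simp
    then have "C z = Jcost N f g x u" by (simp add: Jcost_eq)
    then show "let z = (\<chi> s. entriesI (x (pos s)) k) :: real^('m::enum)^('T::enum) in
             (\<forall>t\<le>N. xz k z t = x t) \<and> (\<forall>t<N. uz A k z t = u t) \<and> C z = Jcost N f g x u"
      using X U unfolding z_def Let_def by simp
  qed
  have P3: "\<forall>z::real^('m::enum)^('T::enum).
          (\<forall>t<N. xz k z (t + 1) = A *v xz k z t + B *v uz A k z t)
          \<and> Jcost N f g (xz k z) (uz A k z) = C z"
  proof
    fix z :: "real^('m::enum)^('T::enum)"
    have a: "\<forall>t<N. xz k z (t + 1) = A *v xz k z t + B *v uz A k z t"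
      using c.xz_step[of z] by blast
    have b: "Jcost N f g (xz k z) (uz A k z) = C z" by (simp add: Jcost_eq Ceq)
    show "(\<forall>t<N. xz k z (t + 1) = A *v xz k z t + B *v uz A k z t)
          \<and> Jcost N f g (xz k z) (uz A k z) = C z" using a b by blast
  qed
  have P4: "\<forall>t<N. \<forall>(z::real^('m::enum)^('T::enum)) z'::real^('m::enum)^('T::enum).
          (\<forall>s\<in>{1..N}. int t - int p + 1 \<le> int s \<and> s \<le> t + 1 \<longrightarrow> z $ ix s = z' $ ix s) \<longrightarrow>
          f t (xz k z t) + g t (uz A k z t) = f t (xz k z' t) + g t (uz A k z' t)"
  proof (intro allI impI)
    fix t and z z' :: "real^('m::enum)^('T::enum)"
    assume t: "t < N" and ag: "\<forall>s\<in>{1..N}. int t - int p + 1 \<le> int s \<and> s \<le> t + 1 \<longrightarrow> z $ ix s = z' $ ix s"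
    have "xz k z t = (xz k z' t :: real^('n::enum)) \<and> uz A k z t = uz A k z' t"
      by (rule c.local_dep) (use t ag in \<open>simp_all add: N_def p_def\<close>)
    then show "f t (xz k z t) + g t (uz A k z t) = f t (xz k z' t) + g t (uz A k z' t)" by simp
  qed
  show ?thesis
    apply (intro conjI)
        apply (rule SC)
       apply (rule SM)
      apply (rule P2)
     apply (intro allI conjI)
       apply (rule xz_zero_gen)
    using P3 apply blast
    using P3 apply blast
    using P4 apply blast
    done
qed


end
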